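(* Let $\ell>0$ and $\Omega_\ell=(0,\pi)\times(-\ell,\ell)$. Consider the eigenvalue problem \[ \begin{cases} \Delta^2 u=-\lambda \Delta u, & \text{in }\Omega_\ell,\\ u=0, & \text{on }\partial\Omega_\ell,\\ u_y=0, & \text{on }(0,\pi)\times\{-\ell,\ell\},\\ u_{xx}=0, & \text{on }\{0,\pi\}\times(-\ell,\ell). \end{cases} \] Then for every $k,m\in\mathbb N^*=\{1,2,\dots\}$ there exists a unique $\gamma_{k,m}\in\left(\frac{k\pi}{2\ell},\frac{(k+1)\pi}{2\ell}\right)$ satisfying $\gamma\tan(\gamma\ell)=-m\tanh(m\ell)$ if $k$ is odd, and $\frac{\tan(\gamma\ell)}{\gamma}=\frac{\tanh(m\ell)}{m}$ if $k$ is even. Setting $\lambda_{k,m}=m^2+\gamma_{k,m}^2$, the problem above admits the eigenfunction \[ u_{k,m}(x,y)=h_{k,m}(y)\sin(mx) \] with eigenvalue $\lambda_{k,m}$, where $h_{k,m}$ is a nontrivial solution of \[ \begin{cases} h^{(iv)}(y)+(\lambda-2m^2)h''(y)+m^2(m^2-\lambda)h(y)=0, & y\in(-\ell,\ell),\\ h(-\ell)=h(\ell)=0,\\ h'(-\ell)=h'(\ell)=0, \end{cases} \] with $\lambda=\lambda_{k,m}$; explicitly, with $\gamma=\gamma_{k,m}$, $h_{k,m}(y)=\cosh(my)-\frac{\cosh(m\ell)}{\cos(\gamma\ell)}\cos(\gamma y)$ if $k$ is odd and $h_{k,m}(y)=\sinh(my)-\frac{\sinh(m\ell)}{\sin(\gamma\ell)}\sin(\gamma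 y)$ if $k$ is even. Moreover: (a) if $k$ is odd then $h_{k,m}$ is even, and if $k$ is even then $h_{k,m}$ is odd; (b) if $k=1$ then $h_{1,m}$ is strictly positive on $(-\ell,\ell)$.
   Context: $\Delta$ denotes the Laplacian in $\mathbb R^2$ with coordinates $(x,y)$; subscripts denote partial derivatives. *)

theory Defs
  imports "HOL-Analysis.Analysis"
begin

definition dx :: "(real \<Rightarrow> real \<Rightarrow> real) \<Rightarrow> real \<Rightarrow> real \<Rightarrow> real" where
  "dx u = (\<lambda>x y. deriv (\<lambda>t. u t y) x)"

definition dy :: "(real \<Rightarrow> real \<Rightarrow> real) \<Rightarrow> real \<Rightarrow> real \<Rightarrow> real" where
  "dy u = (\<lambda>x y. deriv (\<lambda>t. u x t) y)"

definition lap :: "(real \<Rightarrow> real \<Rightarrow> real) \<Rightarrow> real \<Rightarrow> real \<Rightarrow> real" where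
  "lap u = (\<lambda>x y. dx (dx u) x y + dy (dy u) x y)"

definition Omega :: "real \<Rightarrow> (real \<times> real) set" where
  "Omega l = {0<..<pi} \<times> {-l<..<l}"

definition is_eigenpair :: "real \<Rightarrow> real \<Rightarrow> (real \<Rightarrow> real \<Rightarrow> real) \<Rightarrow> bool" where
  "is_eigenpair l lam u \<longleftrightarrow>
     (\<forall>x y. (x, y) \<in> Omega l \<longrightarrow> lap (lap u) x y = - lam * lap u x y) \<and>
     (\<forall>x y. (x, y) \<in> frontier (Omega l) \<longrightarrow> u x y = 0) \<and>
     (\<forall>x \<in> {0<..<pi}. dy u x (-l) = 0 \<and> dy u x l = 0) \<and>
     (\<forall>y \<in> {-l<..<l}. dx (dx u) 0 y = 0 \<and> dx (dx u) pi y = 0) \<and>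
     (\<exists>x y. (x, y) \<in> Omega l \<and> u x y \<noteq> 0)"

definition gamma_eq :: "nat \<Rightarrow> nat \<Rightarrow> real \<Rightarrow> real \<Rightarrow> bool" where
  "gamma_eq k m l \<gamma> \<longleftrightarrow>
     (if odd k then \<gamma> * tan (\<gamma> * l) = - real m * tanh (real m * l)
      else tan (\<gamma> * l) / \<gamma> = tanh (real m * l) / real m)"

definition hkm :: "nat \<Rightarrow> nat \<Rightarrow> real \<Rightarrow> real \<Rightarrow> real \<Rightarrow> real" where
  "hkm k m l \<gamma> y =
     (if odd k then cosh (real m * y) - cosh (real m * l) / cos (\<gamma> * l) * cos (\<gamma> * y)
      else sinh (real m * y) - sinh (real m * l) / sin (\<gamma> * l) * sin (\<gamma> * y))"

definition ode_solution :: "real \<Rightarrow> nat \<Rightarrow> real \<Rightarrow> (real \<Rightarrow> real) \<Rightarrow> bool" where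
  "ode_solution l m lam h \<longleftrightarrow>
     (\<forall>n y. (deriv ^^ n) h differentiable (at y)) \<and>
     (\<forall>y \<in> {-l<..<l}. (deriv ^^ 4) h y + (lam - 2 * (real m)\<^sup>2) * (deriv ^^ 2) h y
                        + (real m)\<^sup>2 * ((real m)\<^sup>2 - lam) * h y = 0) \<and>
     h (-l) = 0 \<and> h l = 0 \<and> deriv h (-l) = 0 \<and> deriv h l = 0 \<and>
     (\<exists>y \<in> {-l<..<l}. h y \<noteq> 0)"

end

theory Submission
  imports Defs
begin


definition fam :: "real \<Rightarrow> real \<Rightarrow> real \<Rightarrow> real \<Rightarrow> real \<Rightarrow> real \<Rightarrow> real \<Rightarrow> real" where
  "fam m g a b c d = (\<lambda>y. a * cosh (m*y) + b * sinh (m*y) + c * cos (g*y) + d * sin (g*y))"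

lemma fam_has_deriv:
  "(fam m g a b c d has_real_derivative fam m g (m*b) (m*a) (g*d) (-g*c) y) (at y)"
  unfolding fam_def
  by (rule derivative_eq_intros refl | simp)+

lemma fam_deriv: "deriv (fam m g a b c d) = fam m g (m*b) (m*a) (g*d) (-g*c)"
  using fam_has_deriv DERIV_imp_deriv by blast

lemma fam_diff: "fam m g a b c d differentiable (at y)"
  using fam_has_deriv real_differentiable_def by blast

lemma fam_iter: "\<exists>a' b' c' d'. (deriv ^^ n) (fam m g a b c d) = fam m g a' b' c' d'"
proof (induction n)
  case 0 then show ?case by auto
next
  case (Suc n)
  then obtain a' b' c' d' where "(deriv ^^ n) (fam m g a b c d) = fam m g a' b' c' d'" by blast
  then show ?case by (auto simp: fam_deriv)
qed

lemma fam_iter_diff: "(deriv ^^ n) (fam m g a b c d) differentiable (at y)"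
  using fam_iter fam_diff by metis

lemma fam_d2: "(deriv ^^ 2) (fam m g a b c d) = fam m g (m^2*a) (m^2*b) (-(g^2)*c) (-(g^2)*d)"
  by (simp add: numeral_2_eq_2 fam_deriv power2_eq_square algebra_simps)

lemma fam_d4: "(deriv ^^ 4) (fam m g a b c d) = fam m g (m^4*a) (m^4*b) (g^4*c) (g^4*d)"
  by (simp add: numeral_eq_Suc fam_deriv power_def algebra_simps)



lemma dx_sin: "dx (\<lambda>x y. F y * sin (M*x)) = (\<lambda>x y. F y * M * cos (M*x))"
  unfolding dx_def
  by (intro ext DERIV_imp_deriv) (rule derivative_eq_intros refl | simp)+

lemma dx_cos: "dx (\<lambda>x y. F y * M * cos (M*x)) = (\<lambda>x y. - (M^2) * F y * sin (M*x))"
  unfolding dx_def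
  by (intro ext DERIV_imp_deriv) ((rule derivative_eq_intros refl | simp)+, simp add: power2_eq_square)

lemma dy_fam: "dy (\<lambda>x y. fam m g a b c d y * S x) = (\<lambda>x y. fam m g (m*b) (m*a) (g*d) (-g*c) y * S x)"
  unfolding dy_def
  by (intro ext DERIV_imp_deriv) (rule derivative_eq_intros fam_has_deriv refl | simp)+

lemma lap_fam: "lap (\<lambda>x y. fam m g a b c d y * sin (M*x)) =
   (\<lambda>x y. fam m g ((m^2-M^2)*a) ((m^2-M^2)*b) ((-(g^2)-M^2)*c) ((-(g^2)-M^2)*d) y * sin (M*x))"
  unfolding lap_def dx_sin dx_cos dy_fam
  by (intro ext) (simp add: fam_def power2_eq_square algebra_simps)



lemma between_half_pi:
  fixes t :: real
  assumes "real k * pi / 2 < t" "t < (real k + 1) * pi / 2"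
  shows "cos t \<noteq> 0 \<and> sin t \<noteq> 0"
proof -
  have "0 \<le> real k * pi / 2" by simp
  then have t0: "t > 0" using assms(1) by linarith
  have nn: "\<And>n. real n * (pi/2) \<ge> 0" by simp
  have key: False if "t = real n * (pi/2)" for n
  proof -
    have "real k < real n" using assms(1) that by (simp add: field_simps)
    moreover have "real n * pi < (real k + 1) * pi" using assms(2) that by (simp add: field_simps)
    then have "real n < real k + 1" using pi_gt_zero mult_less_cancel_right_pos by blast
    ultimately have "real k < real n" "real n < real (Suc k)" by auto
    then have "k < n" "n < Suc k" by (simp_all only: of_nat_less_iff)
    then show False by linarith
  qed
  have "cos t \<noteq> 0"
  proof
    assume "cos t = 0"
    then show False unfolding cos_zero_iff
    proof (elim disjE exE conjE)
      fix n assume "t = real n * (pi/2)" then show False by (rule key)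
    next
      fix n assume "t = - (real n * (pi/2))" then show False using nn[of n] t0 by linarith
    qed
  qed
  moreover have "sin t \<noteq> 0"
  proof
    assume "sin t = 0"
    then show False unfolding sin_zero_iff
    proof (elim disjE exE conjE)
      fix n assume "t = real n * (pi/2)" then show False by (rule key)
    next
      fix n assume "t = - (real n * (pi/2))" then show False using nn[of n] t0 by linarith
    qed
  qed
  ultimately show ?thesis by blast
qed

lemma sign_change_root:
  fixes f :: "real \<Rightarrow> real"
  assumes "a < b" "continuous_on {a..b} f" "f a * f b < 0"
  shows "\<exists>x. a < x \<and> x < b \<and> f x = 0"
proof -
  have "f a \<le> 0 \<and> 0 \<le> f b \<or> f b \<le> 0 \<and> 0 \<le> f a"
    using assms(3) by (metis linorder_le_cases mult_nonneg_nonneg mult_nonpos_nonpos not_less)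
  then obtain x where x: "a \<le> x" "x \<le> b" "f x = 0"
    using IVT'[of f a 0 b] IVT2'[of f b 0 a] assms(1,2) by force
  have "x \<noteq> a" "x \<noteq> b" using x assms(3) by auto
  then show ?thesis using x by (intro exI[of _ x]) auto
qed



lemma mem_I:
  assumes "l > 0"
  shows "\<gamma> \<in> {real k * pi / (2 * l) <..< (real k + 1) * pi / (2 * l)} \<longleftrightarrow>
         real k * pi / 2 < \<gamma> * l \<and> \<gamma> * l < (real k + 1) * pi / 2"
  using assms by (auto simp: field_simps)

lemma tan_deriv_l:
  assumes "cos (g * l) \<noteq> 0"
  shows "((\<lambda>g. tan (g * l)) has_real_derivative inverse ((cos (g*l))\<^sup>2) * l) (at g)"
proof -
  have "((\<lambda>g. g * l) has_real_derivative l) (at g)"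
    by (rule derivative_eq_intros refl | simp)+
  from DERIV_chain2[OF DERIV_tan[OF assms] this] show ?thesis by simp
qed

lemma sincos_bound: "\<bar>sin t * cos t\<bar> \<le> (1::real)"
  by (simp add: abs_mult mult_le_one)

lemma odd_mono:
  assumes l: "l > 0" and k: "k \<ge> 1" and ab: "a < b"
    and I: "\<And>g. a \<le> g \<Longrightarrow> g \<le> b \<Longrightarrow> real k * pi / 2 < g * l \<and> g * l < (real k + 1) * pi / 2"
  shows "a * tan (a * l) < b * tan (b * l)"
proof (rule DERIV_pos_imp_increasing[OF ab])
  fix g assume g: "a \<le> g" "g \<le> b"
  define t where "t = g * l"
  have tI: "real k * pi / 2 < t" "t < (real k + 1) * pi / 2" using I[OF g] t_def by auto
  have c: "cos t \<noteq> 0" using between_half_pi[OF tI] by blast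
  have "real k * pi / 2 \<ge> pi / 2" using k by (simp add: field_simps)
  then have t1: "t > 1" using tI pi_gt3 by linarith
  have d: "((\<lambda>g. g * tan (g * l)) has_real_derivative (tan t + g * (inverse ((cos t)\<^sup>2) * l))) (at g)"
    using DERIV_mult[OF DERIV_ident tan_deriv_l[of g l]] c t_def by (simp add: algebra_simps)
  have "tan t + g * (inverse ((cos t)\<^sup>2) * l) = (sin t * cos t + t) / (cos t)\<^sup>2"
    using c by (simp add: tan_def t_def field_simps power2_eq_square)
  moreover have "(sin t * cos t + t) / (cos t)\<^sup>2 > 0"
    using c t1 sincos_bound[of t] by (intro divide_pos_pos) auto
  ultimately show "\<exists>y. ((\<lambda>g. g * tan (g * l)) has_real_derivative y) (at g) \<and> 0 < y"
    using d by auto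
qed

lemma even_mono:
  assumes l: "l > 0" and k: "k \<ge> 1" and ab: "a < b"
    and I: "\<And>g. a \<le> g \<Longrightarrow> g \<le> b \<Longrightarrow> real k * pi / 2 < g * l \<and> g * l < (real k + 1) * pi / 2"
  shows "tan (a * l) / a < tan (b * l) / b"
proof (rule DERIV_pos_imp_increasing[OF ab])
  fix g assume g: "a \<le> g" "g \<le> b"
  define t where "t = g * l"
  have tI: "real k * pi / 2 < t" "t < (real k + 1) * pi / 2" using I[OF g] t_def by auto
  have c: "cos t \<noteq> 0" using between_half_pi[OF tI] by blast
  have "real k * pi / 2 \<ge> pi / 2" using k by (simp add: field_simps)
  then have t1: "t > 1" using tI pi_gt3 by linarith
  have gp: "g > 0" using t1 t_def l by (metis mult_pos_pos not_less_iff_gr_or_eq zero_less_mult_pos2 zero_less_one order.strict_trans)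
  have d: "((\<lambda>g. tan (g * l) / g) has_real_derivative
           ((inverse ((cos t)\<^sup>2) * l) * g - tan t * 1) / (g * g)) (at g)"
    using DERIV_divide[OF tan_deriv_l[of g l] DERIV_ident] c t_def gp by simp
  have "((inverse ((cos t)\<^sup>2) * l) * g - tan t * 1) / (g * g) = (t - sin t * cos t) / ((cos t)\<^sup>2 * (g * g))"
    using c gp by (simp add: tan_def t_def field_simps power2_eq_square)
  moreover have "(t - sin t * cos t) / ((cos t)\<^sup>2 * (g * g)) > 0"
    using c t1 gp sincos_bound[of t] by (intro divide_pos_pos) auto
  ultimately show "\<exists>y. ((\<lambda>g. tan (g * l) / g) has_real_derivative y) (at g) \<and> 0 < y"
    using d by auto
qed



lemma I_sub:
  assumes l: "l > 0" and g1: "g1 \<in> {real k * pi / (2 * l) <..< (real k + 1) * pi / (2 * l)}"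
    and g2: "g2 \<in> {real k * pi / (2 * l) <..< (real k + 1) * pi / (2 * l)}"
  shows "\<And>g. g1 \<le> g \<Longrightarrow> g \<le> g2 \<Longrightarrow> real k * pi / 2 < g * l \<and> g * l < (real k + 1) * pi / 2"
proof -
  fix g assume "g1 \<le> g" "g \<le> g2"
  then have "g \<in> {real k * pi / (2 * l) <..< (real k + 1) * pi / (2 * l)}" using g1 g2 by auto
  then show "real k * pi / 2 < g * l \<and> g * l < (real k + 1) * pi / 2" using mem_I[OF l] by blast
qed

lemma gamma_odd:
  assumes l: "l > 0" and k: "odd k" and M: "M > 0"
  shows "\<exists>!\<gamma>. \<gamma> \<in> {real k * pi / (2 * l) <..< (real k + 1) * pi / (2 * l)} \<and> \<gamma> * tan (\<gamma> * l) = - M"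
proof (rule ex_ex1I)
  define a where "a = real k * pi / (2 * l)"
  define b where "b = (real k + 1) * pi / (2 * l)"
  have k1: "k \<ge> 1" using k by (cases k) auto
  have a0: "a > 0" using l k1 by (simp add: a_def)
  have ab: "a < b" using l by (simp add: a_def b_def divide_strict_right_mono)
  define t0 where "t0 = real k * (pi / 2)"
  have al: "a * l = t0" "b * l = t0 + pi/2" using l by (auto simp: a_def b_def t0_def field_simps)
  have c0: "cos t0 = 0" unfolding cos_zero_iff t0_def using k by blast
  have s0: "(sin t0)\<^sup>2 = 1" using sin_cos_squared_add[of t0] c0 by simp
  define \<phi> where "\<phi> = (\<lambda>g. g * sin (g * l) + M * cos (g * l))"
  have cont: "continuous_on {a..b} \<phi>" unfolding \<phi>_def by (intro continuous_intros)
  have "\<phi> a * \<phi> b = - (a * M * (sin t0)\<^sup>2)"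
    unfolding \<phi>_def al using c0 by (simp add: sin_add cos_add power2_eq_square algebra_simps)
  also have "\<dots> < 0" using a0 M s0 by simp
  finally obtain g where g: "a < g" "g < b" "\<phi> g = 0" using sign_change_root[OF ab cont] by blast
  have gI: "g \<in> {real k * pi / (2 * l) <..< (real k + 1) * pi / (2 * l)}" using g by (simp add: a_def b_def)
  have "cos (g * l) \<noteq> 0" using between_half_pi gI mem_I[OF l] by blast
  then have "g * tan (g * l) = - M" using g(3) unfolding \<phi>_def tan_def by (simp add: field_simps)
  then show "\<exists>\<gamma>. \<gamma> \<in> {real k * pi / (2 * l) <..< (real k + 1) * pi / (2 * l)} \<and> \<gamma> * tan (\<gamma> * l) = - M"
    using gI by blast
next
  fix x y assume x: "x \<in> {real k * pi / (2 * l) <..< (real k + 1) * pi / (2 * l)} \<and> x * tan (x * l) = - M"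
    and y: "y \<in> {real k * pi / (2 * l) <..< (real k + 1) * pi / (2 * l)} \<and> y * tan (y * l) = - M"
  have k1: "k \<ge> 1" using k by (cases k) auto
  show "x = y"
  proof (rule linorder_cases[of x y])
    assume "x < y" from odd_mono[OF l k1 this I_sub[OF l x[THEN conjunct1] y[THEN conjunct1]]] x y show ?thesis by auto
  next
    assume "y < x" from odd_mono[OF l k1 this I_sub[OF l y[THEN conjunct1] x[THEN conjunct1]]] x y show ?thesis by auto
  qed
qed

lemma gamma_even:
  assumes l: "l > 0" and k: "even k" "k \<ge> 1" and M: "M > 0" and T: "T > 0"
  shows "\<exists>!\<gamma>. \<gamma> \<in> {real k * pi / (2 * l) <..< (real k + 1) * pi / (2 * l)} \<and> tan (\<gamma> * l) / \<gamma> = T / M"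
proof (rule ex_ex1I)
  define a where "a = real k * pi / (2 * l)"
  define b where "b = (real k + 1) * pi / (2 * l)"
  have a0: "a > 0" using l k by (simp add: a_def)
  have ab: "a < b" using l by (simp add: a_def b_def divide_strict_right_mono)
  define t0 where "t0 = real k * (pi / 2)"
  have al: "a * l = t0" "b * l = t0 + pi/2" using l by (auto simp: a_def b_def t0_def field_simps)
  have c0: "sin t0 = 0" unfolding sin_zero_iff t0_def using k by blast
  have s0: "(cos t0)\<^sup>2 = 1" using sin_cos_squared_add[of t0] c0 by simp
  define \<phi> where "\<phi> = (\<lambda>g. M * sin (g * l) - g * T * cos (g * l))"
  have cont: "continuous_on {a..b} \<phi>" unfolding \<phi>_def by (intro continuous_intros)
  have "\<phi> a * \<phi> b = - (a * T * M * (cos t0)\<^sup>2)"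
    unfolding \<phi>_def al using c0 by (simp add: sin_add cos_add power2_eq_square algebra_simps)
  also have "\<dots> < 0" using a0 M T s0 by simp
  finally obtain g where g: "a < g" "g < b" "\<phi> g = 0" using sign_change_root[OF ab cont] by blast
  have gI: "g \<in> {real k * pi / (2 * l) <..< (real k + 1) * pi / (2 * l)}" using g by (simp add: a_def b_def)
  have g0: "g > 0" using a0 g by simp
  have "cos (g * l) \<noteq> 0" using between_half_pi gI mem_I[OF l] by blast
  then have "tan (g * l) / g = T / M" using g(3) g0 M unfolding \<phi>_def tan_def by (simp add: field_simps)
  then show "\<exists>\<gamma>. \<gamma> \<in> {real k * pi / (2 * l) <..< (real k + 1) * pi / (2 * l)} \<and> tan (\<gamma> * l) / \<gamma> = T / M"
    using gI by blast
next
  fix x y assume x: "x \<in> {real k * pi / (2 * l) <..< (real k + 1) * pi / (2 * l)} \<and> tan (x * l) / x = T / M"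
    and y: "y \<in> {real k * pi / (2 * l) <..< (real k + 1) * pi / (2 * l)} \<and> tan (y * l) / y = T / M"
  show "x = y"
  proof (rule linorder_cases[of x y])
    assume "x < y" from even_mono[OF l k(2) this I_sub[OF l x[THEN conjunct1] y[THEN conjunct1]]] x y show ?thesis by auto
  next
    assume "y < x" from even_mono[OF l k(2) this I_sub[OF l y[THEN conjunct1] x[THEN conjunct1]]] x y show ?thesis by auto
  qed
qed



lemma frontier_Omega:
  assumes "l > 0" "(x, y) \<in> frontier (Omega l)"
  shows "x = 0 \<or> x = pi \<or> y = -l \<or> y = l"
proof -
  have o: "open (Omega l)" unfolding Omega_def by (intro open_Times open_greaterThanLessThan)
  have "frontier (Omega l) = ({0..pi} \<times> {-l..l}) - Omega l"
    unfolding frontier_def interior_open[OF o] unfolding Omega_def closure_Times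
    using assms(1) by simp
  then show ?thesis using assms(2) unfolding Omega_def by auto
qed

lemma generic:
  fixes l :: real and m :: nat and g a b c d :: real
  assumes l: "l > 0" and m: "m \<ge> 1"
    and F: "F = fam (real m) g a b c d"
    and b1: "F l = 0" "F (-l) = 0" "deriv F l = 0" "deriv F (-l) = 0"
    and nz: "y0 \<in> {-l<..<l}" "F y0 \<noteq> 0"
  shows "is_eigenpair l ((real m)\<^sup>2 + g\<^sup>2) (\<lambda>x y. F y * sin (real m * x)) \<and>
         ode_solution l m ((real m)\<^sup>2 + g\<^sup>2) F"
proof
  show "ode_solution l m ((real m)\<^sup>2 + g\<^sup>2) F"
    unfolding ode_solution_def
  proof (intro conjI)
    show "\<forall>n y. (deriv ^^ n) F differentiable at y" using F fam_iter_diff by simp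
    show "\<forall>y\<in>{- l<..<l}. (deriv ^^ 4) F y + ((real m)\<^sup>2 + g\<^sup>2 - 2 * (real m)\<^sup>2) * (deriv ^^ 2) F y +
        (real m)\<^sup>2 * ((real m)\<^sup>2 - ((real m)\<^sup>2 + g\<^sup>2)) * F y = 0"
      unfolding F fam_d2 fam_d4 by (auto simp: fam_def algebra_simps power2_eq_square power4_eq_xxxx)
    show "\<exists>y\<in>{- l<..<l}. F y \<noteq> 0" using nz by blast
  qed (use b1 in auto)
next
  let ?u = "\<lambda>x y. F y * sin (real m * x)"
  have lap2: "lap (lap ?u) x y = - ((real m)\<^sup>2 + g\<^sup>2) * lap ?u x y" for x y
    unfolding F lap_fam by (simp add: fam_def algebra_simps power2_eq_square)
  have fr: "?u x y = 0" if "(x, y) \<in> frontier (Omega l)" for x y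
  proof -
    have "x = 0 \<or> x = pi \<or> y = -l \<or> y = l" using frontier_Omega[OF l that] .
    then show ?thesis using b1 by (auto simp: mult.commute[of "real m" pi])
  qed
  have dyu: "dy ?u x y = deriv F y * sin (real m * x)" for x y
    unfolding F dy_fam fam_deriv ..
  have dxx: "dx (dx ?u) x y = - ((real m)\<^sup>2) * F y * sin (real m * x)" for x y
    unfolding dx_sin dx_cos ..
  have "m > 0" using m by simp
  then have s1: "sin (real m * (pi / (2 * real m))) = 1" by simp
  have x0: "pi / (2 * real m) \<in> {0<..<pi}" using m by (auto simp: field_simps)
  show "is_eigenpair l ((real m)\<^sup>2 + g\<^sup>2) ?u"
    unfolding is_eigenpair_def
  proof (intro conjI)
    show "\<exists>x y. (x, y) \<in> Omega l \<and> ?u x y \<noteq> 0"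
      using x0 nz s1 unfolding Omega_def by (intro exI[of _ "pi / (2 * real m)"] exI[of _ y0]) auto
  qed (use lap2 fr dyu dxx b1 in \<open>auto simp: mult.commute[of "real m" pi]\<close>)
qed



lemma odd_case:
  fixes l \<gamma> :: real and k m :: nat
  assumes l: "l > 0" and k: "odd k" and m: "m \<ge> 1"
    and gI: "\<gamma> \<in> {real k * pi / (2 * l) <..< (real k + 1) * pi / (2 * l)}"
    and eq: "\<gamma> * tan (\<gamma> * l) = - real m * tanh (real m * l)"
  shows "is_eigenpair l ((real m)\<^sup>2 + \<gamma>\<^sup>2) (\<lambda>x y. hkm k m l \<gamma> y * sin (real m * x)) \<and>
         ode_solution l m ((real m)\<^sup>2 + \<gamma>\<^sup>2) (hkm k m l \<gamma>)"
proof (rule generic[OF l m])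
  define C where "C = cosh (real m * l) / cos (\<gamma> * l)"
  have c: "cos (\<gamma> * l) \<noteq> 0" using between_half_pi gI mem_I[OF l] by blast
  have ch: "cosh (real m * l) > 1" using l m cosh_real_ge_1[of "real m * l"] by (auto simp: order_le_less)
  show F: "hkm k m l \<gamma> = fam (real m) \<gamma> 1 0 (-C) 0"
    using k by (auto simp: hkm_def fam_def C_def mult.commute)
  show "hkm k m l \<gamma> l = 0" "hkm k m l \<gamma> (-l) = 0"
    using c unfolding F by (auto simp: fam_def C_def mult.commute)
  have e2: "\<gamma> * sin (\<gamma> * l) = - real m * tanh (real m * l) * cos (\<gamma> * l)"
    using eq c by (simp add: tan_def field_simps)
  have dl: "real m * sinh (real m * l) + \<gamma> * C * sin (\<gamma> * l) = 0"
  proof -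
    have "\<gamma> * C * sin (\<gamma> * l) = C * (\<gamma> * sin (\<gamma> * l))" by simp
    also have "\<dots> = - real m * sinh (real m * l)"
      unfolding e2 C_def tanh_def using c ch by (simp add: field_simps)
    finally show ?thesis by simp
  qed
  show "deriv (hkm k m l \<gamma>) l = 0" "deriv (hkm k m l \<gamma>) (-l) = 0"
    unfolding F fam_deriv using dl by (auto simp: fam_def mult.commute)
  show "0 \<in> {-l<..<l}" using l by simp
  have "C \<noteq> 1"
  proof
    assume "C = 1"
    then have "cosh (real m * l) = cos (\<gamma> * l)" using c by (simp add: C_def field_simps)
    then show False using ch cos_le_one[of "\<gamma> * l"] by simp
  qed
  then show "hkm k m l \<gamma> 0 \<noteq> 0" unfolding F by (simp add: fam_def)
qed

lemma even_case:
  fixes l \<gamma> :: real and k m :: nat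
  assumes l: "l > 0" and k: "even k" "k \<ge> 1" and m: "m \<ge> 1"
    and gI: "\<gamma> \<in> {real k * pi / (2 * l) <..< (real k + 1) * pi / (2 * l)}"
    and eq: "tan (\<gamma> * l) / \<gamma> = tanh (real m * l) / real m"
  shows "is_eigenpair l ((real m)\<^sup>2 + \<gamma>\<^sup>2) (\<lambda>x y. hkm k m l \<gamma> y * sin (real m * x)) \<and>
         ode_solution l m ((real m)\<^sup>2 + \<gamma>\<^sup>2) (hkm k m l \<gamma>)"
proof (rule generic[OF l m])
  define S where "S = sinh (real m * l) / sin (\<gamma> * l)"
  have cs: "cos (\<gamma> * l) \<noteq> 0" "sin (\<gamma> * l) \<noteq> 0" using between_half_pi gI mem_I[OF l] by blast+
  have ch: "cosh (real m * l) > 0" using cosh_real_ge_1[of "real m * l"] by linarith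
  have k2: "k \<ge> 2" using k by presburger
  have "real k * pi / 2 < \<gamma> * l" using gI mem_I[OF l] by blast
  moreover have "pi \<le> real k * pi / 2" using k2 by (simp add: field_simps)
  ultimately have gl: "pi < \<gamma> * l" by linarith
  have g0: "\<gamma> > 0" using gl l pi_gt_zero by (metis mult_pos_pos not_less_iff_gr_or_eq zero_less_mult_pos2 order.strict_trans mult_neg_pos)
  have m0: "real m > 0" using m by simp
  show F: "hkm k m l \<gamma> = fam (real m) \<gamma> 0 1 0 (-S)"
    using k by (auto simp: hkm_def fam_def S_def mult.commute)
  show "hkm k m l \<gamma> l = 0" "hkm k m l \<gamma> (-l) = 0"
    using cs unfolding F by (auto simp: fam_def S_def mult.commute)
  have e2: "real m * sin (\<gamma> * l) * cosh (real m * l) = \<gamma> * sinh (real m * l) * cos (\<gamma> * l)"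
    using eq cs g0 m0 ch by (simp add: tan_def tanh_def field_simps)
  have dl: "real m * cosh (real m * l) - \<gamma> * S * cos (\<gamma> * l) = 0"
    unfolding S_def using cs e2 by (simp add: field_simps)
  show "deriv (hkm k m l \<gamma>) l = 0" "deriv (hkm k m l \<gamma>) (-l) = 0"
    unfolding F fam_deriv using dl by (auto simp: fam_def mult.commute)
  have y0: "pi / \<gamma> < l" using gl g0 by (simp add: field_simps)
  have "pi / \<gamma> > 0" using g0 by simp
  then show "pi / \<gamma> \<in> {-l<..<l}" using y0 l by auto
  have "hkm k m l \<gamma> (pi / \<gamma>) = sinh (real m * (pi / \<gamma>))"
    unfolding F using g0 by (simp add: fam_def)
  also have "\<dots> > 0" using m0 g0 by simp
  finally show "hkm k m l \<gamma> (pi / \<gamma>) \<noteq> 0" by simp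
qed



lemma cos_neg_mid: "pi/2 < x \<Longrightarrow> x < pi \<Longrightarrow> cos x < 0"
  using cos_gt_zero_pi[of "pi - x"] by (simp add: cos_diff)

lemma N_deriv:
  fixes g M :: real
  shows "((\<lambda>s. g * sin (g * s) * cosh (M * s) + M * cos (g * s) * sinh (M * s)) has_real_derivative
          ((g\<^sup>2 + M\<^sup>2) * cos (g * s) * cosh (M * s))) (at s)"
  apply (rule derivative_eq_intros refl)+
  apply (simp add: algebra_simps power2_eq_square)
  done

lemma q_deriv:
  fixes g M :: real
  shows "((\<lambda>s. - cos (g * s) / cosh (M * s)) has_real_derivative
          ((g * sin (g * s) * cosh (M * s) + M * cos (g * s) * sinh (M * s)) / (cosh (M * s))\<^sup>2)) (at s)"
proof -
  have c: "cosh (M * s) \<noteq> 0" using cosh_real_ge_1[of "M * s"] by linarith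
  show ?thesis
    apply (rule derivative_eq_intros refl c)+
    using c apply (simp add: field_simps power2_eq_square)
    done
qed

lemma pos_k1:
  fixes l g M :: real
  assumes l: "l > 0" and M: "M > 0" and gl: "pi/2 < g * l" "g * l < pi"
    and eq: "g * tan (g * l) = - M * tanh (M * l)"
    and y: "0 \<le> y" "y < l"
  shows "cosh (M * y) - cosh (M * l) / cos (g * l) * cos (g * y) > 0"
proof -
  have cl: "cos (g * l) < 0" using cos_neg_mid gl by blast
  have g0: "g > 0" using gl l pi_gt_zero by (metis mult_pos_pos not_less_iff_gr_or_eq zero_less_mult_pos2 order.strict_trans mult_neg_pos half_gt_zero)
  have chl: "cosh (M * l) > 0" using cosh_real_ge_1[of "M * l"] by linarith
  have chy: "cosh (M * y) > 0" using cosh_real_ge_1[of "M * y"] by linarith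
  have A: "- cosh (M * l) / cos (g * l) > 0" using cl chl by (simp add: divide_pos_neg)
  show ?thesis
  proof (cases "cos (g * y) \<ge> 0")
    case True
    have "0 \<le> (- cosh (M * l) / cos (g * l)) * cos (g * y)" using A True by (intro mult_nonneg_nonneg) auto
    moreover have "cosh (M * y) - cosh (M * l) / cos (g * l) * cos (g * y) = cosh (M * y) + (- cosh (M * l) / cos (g * l)) * cos (g * y)" by simp
    ultimately show ?thesis using chy by linarith
  next
    case False
    have gyl: "g * y < g * l" using g0 y by simp
    have "g * y > pi/2"
    proof (rule ccontr)
      assume "\<not> g * y > pi/2"
      moreover have "0 \<le> g * y" using g0 y by simp
      moreover have "0 \<le> pi/2" by simp
      ultimately have "0 \<le> cos (g * y)" by (intro cos_ge_zero) linarith+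
      then show False using False by simp
    qed
    define N where "N = (\<lambda>s. g * sin (g * s) * cosh (M * s) + M * cos (g * s) * sinh (M * s))"
    have Nl: "N l = 0"
    proof -
      have c: "cos (g * l) \<noteq> 0" using cl by simp
      have "g * sin (g * l) = - M * tanh (M * l) * cos (g * l)" using eq c by (simp add: tan_def field_simps)
      then show ?thesis unfolding N_def tanh_def using chl by (simp add: field_simps)
    qed
    have Npos: "N s > 0" if s: "y \<le> s" "s < l" for s
    proof -
      have "(\<lambda>t. - N t) s < (\<lambda>t. - N t) l"
      proof (rule DERIV_pos_imp_increasing[OF s(2)])
        fix t assume t: "s \<le> t" "t \<le> l"
        have "g * t \<ge> g * y" using t s g0 by simp
        moreover have "g * t \<le> g * l" using t g0 by simp
        ultimately have "cos (g * t) < 0" using cos_neg_mid \<open>g * y > pi/2\<close> gl by force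
        moreover have "cosh (M * t) > 0" using cosh_real_ge_1[of "M * t"] by linarith
        ultimately have "- ((g\<^sup>2 + M\<^sup>2) * cos (g * t) * cosh (M * t)) > 0"
        proof -
          assume a: "cos (g * t) < 0" "cosh (M * t) > 0"
          have "g\<^sup>2 + M\<^sup>2 > 0" using g0 by (simp add: add_pos_nonneg)
          then have "(g\<^sup>2 + M\<^sup>2) * cos (g * t) < 0" using a by (simp add: mult_pos_neg)
          then have "(g\<^sup>2 + M\<^sup>2) * cos (g * t) * cosh (M * t) < 0" using a by (simp add: mult_neg_pos)
          then show ?thesis by simp
        qed
        moreover have "((\<lambda>t. - N t) has_real_derivative - ((g\<^sup>2 + M\<^sup>2) * cos (g * t) * cosh (M * t))) (at t)"
          unfolding N_def by (rule DERIV_minus[OF N_deriv])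
        ultimately show "\<exists>d. ((\<lambda>t. - N t) has_real_derivative d) (at t) \<and> 0 < d" by blast
      qed
      then show ?thesis using Nl by simp
    qed
    define q where "q = (\<lambda>s. - cos (g * s) / cosh (M * s))"
    have qd: "(q has_real_derivative (N s / (cosh (M * s))\<^sup>2)) (at s)" for s
      unfolding q_def N_def by (rule q_deriv)
    have "q y < q l"
    proof (rule DERIV_pos_imp_increasing_open[OF y(2)])
      fix s assume s: "y < s" "s < l"
      have "cosh (M * s) \<noteq> 0" using cosh_real_ge_1[of "M * s"] by linarith
      then have "N s / (cosh (M * s))\<^sup>2 > 0" using Npos[of s] s by simp
      then show "\<exists>d. (q has_real_derivative d) (at s) \<and> 0 < d" using qd by blast
    next
      show "continuous_on {y..l} q"
        using qd by (intro continuous_at_imp_continuous_on) (blast intro: DERIV_isCont)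
    qed
    then have "- cos (g * y) * cosh (M * l) < - cos (g * l) * cosh (M * y)"
      unfolding q_def using chl chy by (simp add: field_simps)
    then have "cosh (M * l) / cos (g * l) * cos (g * y) < cosh (M * y)"
      using cl by (simp add: field_simps)
    then show ?thesis by simp
  qed
qed



theorem theorem5p1:
  fixes l :: real and k m :: nat
  assumes "l > 0" and "k \<ge> 1" and "m \<ge> 1"
  shows "(\<exists>!\<gamma>. \<gamma> \<in> {real k * pi / (2 * l) <..< (real k + 1) * pi / (2 * l)} \<and> gamma_eq k m l \<gamma>) \<and>
         (\<forall>\<gamma>. \<gamma> \<in> {real k * pi / (2 * l) <..< (real k + 1) * pi / (2 * l)} \<and> gamma_eq k m l \<gamma> \<longrightarrow>
           (let lam = (real m)\<^sup>2 + \<gamma>\<^sup>2; h = hkm k m l \<gamma> in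
              is_eigenpair l lam (\<lambda>x y. h y * sin (real m * x)) \<and>
              ode_solution l m lam h \<and>
              (odd k \<longrightarrow> (\<forall>y. h (- y) = h y)) \<and>
              (even k \<longrightarrow> (\<forall>y. h (- y) = - h y)) \<and>
              (k = 1 \<longrightarrow> (\<forall>y \<in> {-l<..<l}. h y > 0))))"
proof
  have l: "l > 0" and k: "k \<ge> 1" and m: "m \<ge> 1" using assms by auto
  have m0: "real m > 0" using m by simp
  have T: "tanh (real m * l) > 0" using m0 l by simp
  show "\<exists>!\<gamma>. \<gamma> \<in> {real k * pi / (2 * l) <..< (real k + 1) * pi / (2 * l)} \<and> gamma_eq k m l \<gamma>"
  proof (cases "odd k")
    case True
    have M: "real m * tanh (real m * l) > 0" using m0 T by simp
    show ?thesis using gamma_odd[OF l True M] True by (simp add: gamma_eq_def)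
  next
    case False
    show ?thesis using gamma_even[OF l _ k m0 T] False by (simp add: gamma_eq_def)
  qed
  show "\<forall>\<gamma>. \<gamma> \<in> {real k * pi / (2 * l) <..< (real k + 1) * pi / (2 * l)} \<and> gamma_eq k m l \<gamma> \<longrightarrow>
           (let lam = (real m)\<^sup>2 + \<gamma>\<^sup>2; h = hkm k m l \<gamma> in
              is_eigenpair l lam (\<lambda>x y. h y * sin (real m * x)) \<and>
              ode_solution l m lam h \<and>
              (odd k \<longrightarrow> (\<forall>y. h (- y) = h y)) \<and>
              (even k \<longrightarrow> (\<forall>y. h (- y) = - h y)) \<and>
              (k = 1 \<longrightarrow> (\<forall>y \<in> {-l<..<l}. h y > 0)))"
  proof (intro allI impI)
    fix \<gamma> assume a: "\<gamma> \<in> {real k * pi / (2 * l) <..< (real k + 1) * pi / (2 * l)} \<and> gamma_eq k m l \<gamma>"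
    then have gI: "\<gamma> \<in> {real k * pi / (2 * l) <..< (real k + 1) * pi / (2 * l)}" by blast
    have main: "is_eigenpair l ((real m)\<^sup>2 + \<gamma>\<^sup>2) (\<lambda>x y. hkm k m l \<gamma> y * sin (real m * x)) \<and>
         ode_solution l m ((real m)\<^sup>2 + \<gamma>\<^sup>2) (hkm k m l \<gamma>)"
    proof (cases "odd k")
      case True
      then show ?thesis using odd_case[OF l True m gI] a by (simp add: gamma_eq_def)
    next
      case False
      then show ?thesis using even_case[OF l _ k m gI] a by (simp add: gamma_eq_def)
    qed
    have par1: "odd k \<longrightarrow> (\<forall>y. hkm k m l \<gamma> (- y) = hkm k m l \<gamma> y)"
      by (simp add: hkm_def)
    have par2: "even k \<longrightarrow> (\<forall>y. hkm k m l \<gamma> (- y) = - hkm k m l \<gamma> y)"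
      by (simp add: hkm_def)
    have pos: "k = 1 \<longrightarrow> (\<forall>y \<in> {-l<..<l}. hkm k m l \<gamma> y > 0)"
    proof (intro impI ballI)
      fix y assume k1: "k = 1" and y: "y \<in> {-l<..<l}"
      have gl: "pi/2 < \<gamma> * l" "\<gamma> * l < pi" using gI mem_I[OF l, of \<gamma> k] k1 by auto
      have eq: "\<gamma> * tan (\<gamma> * l) = - real m * tanh (real m * l)" using a k1 by (simp add: gamma_eq_def)
      have P: "hkm k m l \<gamma> z > 0" if "0 \<le> z" "z < l" for z
        using pos_k1[OF l m0 gl eq that] k1 by (simp add: hkm_def)
      show "hkm k m l \<gamma> y > 0"
      proof (cases "y \<ge> 0")
        case True then show ?thesis using P y by auto
      next
        case False
        then have "hkm k m l \<gamma> (- y) > 0" using P y by auto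
        then show ?thesis using par1 k1 by simp
      qed
    qed
    show "let lam = (real m)\<^sup>2 + \<gamma>\<^sup>2; h = hkm k m l \<gamma> in
              is_eigenpair l lam (\<lambda>x y. h y * sin (real m * x)) \<and>
              ode_solution l m lam h \<and>
              (odd k \<longrightarrow> (\<forall>y. h (- y) = h y)) \<and>
              (even k \<longrightarrow> (\<forall>y. h (- y) = - h y)) \<and>
              (k = 1 \<longrightarrow> (\<forall>y \<in> {-l<..<l}. h y > 0))"
      unfolding Let_def using main par1 par2 pos by blast
  qed
qed


end
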